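(* For every integer $n\ge1$, the number of walks $0=y_0,y_1,\dots,y_n=1$ with $y_i-y_{i-1}\in\{-2,-1,+1,+2\}$ for all $i$ and $y_i\ge1$ for all $1\le i\le n$ (basketball walks of length $n$ from the origin to altitude $1$ never returning to the $x$-axis) equals $$\frac1n\sum_{k=1}^{n}(-1)^{k+1}\binom{2k-2}{k-1}\binom{2n}{n-k}=\frac1n\sum_{i=0}^{n}\binom ni\binom{n}{2n+1-3i}.$$
   Context: Binomial coefficients $\binom ab$ with $b<0$ or $b>a\ge0$ are $0$. *)

theory Defs
  imports Complex_Main
begin

definition binomz :: "nat \<Rightarrow> int \<Rightarrow> nat" where
  "binomz a b = (if b < 0 then 0 else a choose (nat b))"

definition basketball_walks :: "nat \<Rightarrow> int list set" where
  "basketball_walks n = {ys. length ys = n + 1 \<and> ys ! 0 = 0 \<and> ys ! n = 1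
     \<and> (\<forall>i\<in>{1..n}. ys ! i - ys ! (i - 1) \<in> {-2, -1, 1, 2})
     \<and> (\<forall>i\<in>{1..n}. ys ! i \<ge> 1)}"

end

theory Submission
  imports Defs "HOL-Computational_Algebra.Polynomial"
begin


lemma fact1: "(fact (m+1)::real) = (real m+1)*fact m"
  by (simp add: fact_Suc)
lemma fact2: "(fact (m+2)::real) = (real m+2)*(real m+1)*fact m"
  by (simp add: fact_Suc eval_nat_numeral algebra_simps)
lemma fact3: "(fact (m+3)::real) = (real m+3)*(real m+2)*(real m+1)*fact m"
  by (simp add: fact_Suc eval_nat_numeral algebra_simps)
lemma fact4: "(fact (m+4)::real) = (real m+4)*(real m+3)*(real m+2)*(real m+1)*fact m"
  by (simp add: fact_Suc eval_nat_numeral algebra_simps)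

definition FA :: "nat \<Rightarrow> nat \<Rightarrow> real" where
  "FA n k = (if k < n then (-1)^k * real ((2*k) choose k) * real ((2*n) choose (n-k-1)) else 0)"
definition BA :: "nat \<Rightarrow> nat \<Rightarrow> real" where
  "BA n k = (-1)^k * (fact (2*k) / (fact k)^2) * (fact (2*n) / (fact (n+2-k) * fact (n+k+3)))"

lemma cbin: "real ((2*k) choose k) = fact (2*k) / (fact k)^2"
  by (subst binomial_fact) (auto simp: power2_eq_square)

lemma FA_0:
  assumes "k \<le> n+2"
  shows "FA n k = BA n k * ((real n+2-real k)*(real n+1-real k)*(real n-real k)*(real n+real k+3)*(real n+real k+2))"
proof (cases "k < n")
  case True
  then obtain d where n: "n = k + d + 1" by (metis add.commute add_Suc less_imp_Suc_add Suc_eq_plus1)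
  define M where "M = 2*k+d"
  have b: "real ((2*n) choose (n-k-1)) = fact (2*n) / (fact d * ((real M+2)*(real M+1)*fact M))"
    by (subst binomial_fact) (auto simp: n M_def fact2[symmetric] ac_simps)
  have e1: "n+2-k = d+3" "n+k+3 = M+4" using n by (auto simp: M_def)
  have e2: "real n = real k + real d + 1" "real M = 2*real k + real d" using n by (auto simp: M_def)
  have "FA n k = (-1)^k * real ((2*k) choose k) * real ((2*n) choose (n-k-1))" using True by (simp add: FA_def)
  also have "\<dots> = (-1)^k * (fact (2*k) / (fact k)^2) * (fact (2*n) / (fact d * ((real M+2)*(real M+1)*fact M)))"
    unfolding b cbin ..
  also have "\<dots> = BA n k * ((real n+2-real k)*(real n+1-real k)*(real n-real k)*(real n+real k+3)*(real n+real k+2))"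
    unfolding BA_def e1 fact3 fact4
    apply (simp add: divide_simps add_pos_pos del: of_nat_add)
    apply (simp add: e2 algebra_simps)
    done
  finally show ?thesis .
next
  case False
  then have "k = n \<or> k = n+1 \<or> k = n+2" using assms by auto
  then show ?thesis using False unfolding FA_def by auto
qed

lemma FA_1:
  assumes "k \<le> n+2"
  shows "FA (n+1) k = BA n k * ((2*real n+1)*(2*real n+2)*(real n+2-real k)*(real n+1-real k)*(real n+real k+3))"
proof (cases "k < n+1")
  case True
  then obtain d where n: "n = k + d" using le_Suc_ex by force
  define M where "M = 2*k+d"
  have b: "real ((2*(n+1)) choose (n+1-k-1)) = (2*real n+2)*(2*real n+1)*fact (2*n) / (fact d * ((real M+2)*(real M+1)*fact M))"
    by (subst binomial_fact) (auto simp: n M_def fact2[symmetric] ac_simps)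
  have e1: "n+2-k = d+2" "n+k+3 = M+3" using n by (auto simp: M_def)
  have e2: "real n = real k + real d" "real M = 2*real k + real d" using n by (auto simp: M_def)
  have "FA (n+1) k = (-1)^k * real ((2*k) choose k) * real ((2*(n+1)) choose (n+1-k-1))" using True by (simp add: FA_def)
  also have "\<dots> = (-1)^k * (fact (2*k) / (fact k)^2) * ((2*real n+2)*(2*real n+1)*fact (2*n) / (fact d * ((real M+2)*(real M+1)*fact M)))"
    unfolding b cbin ..
  also have "\<dots> = BA n k * ((2*real n+1)*(2*real n+2)*(real n+2-real k)*(real n+1-real k)*(real n+real k+3))"
    unfolding BA_def e1 fact3 fact2
    apply (simp add: divide_simps add_pos_pos del: of_nat_add)
    apply (simp add: e2 algebra_simps)
    done
  finally show ?thesis .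
next
  case False
  then have "k = n+1 \<or> k = n+2" using assms by auto
  then show ?thesis using False unfolding FA_def by auto
qed

lemma FA_2:
  assumes "k \<le> n+2"
  shows "FA (n+2) k = BA n k * ((2*real n+1)*(2*real n+2)*(2*real n+3)*(2*real n+4)*(real n+2-real k))"
proof (cases "k < n+2")
  case True
  then obtain d where n: "n+1 = k + d" using le_Suc_ex by force
  define M where "M = 2*k+d"
  have f4: "fact (2*n+4) = (2*real n+4)*(2*real n+3)*(2*real n+2)*(2*real n+1)*fact (2*n)"
    using fact4[of "2*n"] by (simp add: algebra_simps)
  have b: "real ((2*(n+2)) choose (n+2-k-1)) = (2*real n+4)*(2*real n+3)*(2*real n+2)*(2*real n+1)*fact (2*n) / (fact d * fact (M+2))"
  proof -
    have i: "n+2-k-1 = d" "2*(n+2) = 2*n+4" "2*n+4-d = M+2" using n by (auto simp: M_def)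
    show ?thesis unfolding i f4[symmetric] using n by (subst binomial_fact) (auto simp: i)
  qed
  have e1: "n+2-k = d+1" "n+k+3 = M+2" using n by (auto simp: M_def)
  have e2: "real n = real k + real d - 1" "real M = 2*real k + real d" using n by (auto simp: M_def)
  have "FA (n+2) k = (-1)^k * real ((2*k) choose k) * real ((2*(n+2)) choose (n+2-k-1))" using True by (simp add: FA_def)
  also have "\<dots> = (-1)^k * (fact (2*k) / (fact k)^2) * ((2*real n+4)*(2*real n+3)*(2*real n+2)*(2*real n+1)*fact (2*n) / (fact d * fact (M+2)))"
    unfolding b cbin ..
  also have "\<dots> = BA n k * ((2*real n+1)*(2*real n+2)*(2*real n+3)*(2*real n+4)*(real n+2-real k))"
    unfolding BA_def e1 fact1
    apply (simp add: divide_simps add_pos_pos del: of_nat_add)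
    using e2 apply (simp add: algebra_simps)
    done
  finally show ?thesis .
next
  case False
  then have "k = n+2" using assms by auto
  then show ?thesis using False unfolding FA_def by auto
qed

lemma BA_step:
  assumes "k \<le> n+1"
  shows "BA n (k+1) = BA n k * (-(2*(2*real k+1)*(real n+2-real k))/((real k+1)*(real n+real k+4)))"
proof -
  obtain d where n: "n+1 = k + d" using assms le_Suc_ex by force
  have e: "n+2-(k+1) = d" "n+2-k = d+1" "n+(k+1)+3 = (n+k+3)+1" "2*(k+1) = 2*k+2" using n by auto
  have e2: "real d = real n + 1 - real k" using n by (metis add_diff_cancel_left' of_nat_1 of_nat_add)
  show ?thesis unfolding BA_def e fact1 fact2
    apply (simp add: divide_simps add_pos_pos del: of_nat_add)
    apply (simp add: e2 algebra_simps power2_eq_square)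
    done
qed

definition qA :: "real \<Rightarrow> real \<Rightarrow> real" where "qA n k = (- 576*(k)^1 - 1092*(k)^2 - 102*(k)^3 + 264*(k)^4 + 66*(k)^5 - 2952*n^1*(k)^1 - 5342*n^1*(k)^2 - 492*n^1*(k)^3 + 1022*n^1*(k)^4 + 228*n^1*(k)^5 - 5780*n^2*(k)^1 - 9840*n^2*(k)^2 - 888*n^2*(k)^3 + 1268*n^2*(k)^4 + 222*n^2*(k)^5 - 5640*n^3*(k)^1 - 8956*n^3*(k)^2 - 780*n^3*(k)^3 + 610*n^3*(k)^4 + 60*n^3*(k)^5 - 2924*n^4*(k)^1 - 4316*n^4*(k)^2 - 342*n^4*(k)^3 + 100*n^4*(k)^4 - 768*n^5*(k)^1 - 1050*n^5*(k)^2 - 60*n^5*(k)^3 - 80*n^6*(k)^1 - 100*n^6*(k)^2)"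
definition qU :: "real \<Rightarrow> real \<Rightarrow> real" where "qU n j = (- 1008*(j)^1 - 5268*(j)^2 - 7998*(j)^3 - 4746*(j)^4 - 1074*(j)^5 - 66*(j)^6 - 8040*n^1*(j)^1 - 31578*n^1*(j)^2 - 38708*n^1*(j)^3 - 19206*n^1*(j)^4 - 3808*n^1*(j)^5 - 228*n^1*(j)^6 - 26280*n^2*(j)^1 - 79654*n^2*(j)^2 - 77660*n^2*(j)^3 - 30754*n^2*(j)^4 - 4834*n^2*(j)^5 - 222*n^2*(j)^6 - 46808*n^3*(j)^1 - 109420*n^3*(j)^2 - 82108*n^3*(j)^3 - 24214*n^3*(j)^4 - 2600*n^3*(j)^5 - 60*n^3*(j)^6 - 50072*n^4*(j)^1 - 88116*n^4*(j)^2 - 47938*n^4*(j)^3 - 9320*n^4*(j)^4 - 500*n^4*(j)^5 - 33020*n^5*(j)^1 - 41430*n^5*(j)^2 - 14580*n^5*(j)^3 - 1400*n^5*(j)^4 - 13100*n^6*(j)^1 - 10490*n^6*(j)^2 - 1800*n^6*(j)^3 - 2852*n^7*(j)^1 - 1100*n^7*(j)^2 - 260*n^8*(j)^1)"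
definition ra0 :: "real \<Rightarrow> real" where "ra0 n = -18*(11+38*n+37*n^2+10*n^3)"
definition ra1 :: "real \<Rightarrow> real" where "ra1 n = -120-220*n-147*n^2-35*n^3"
definition ra2 :: "real \<Rightarrow> real" where "ra2 n = 60+134*n+94*n^2+20*n^3"

lemma polyA: "(k+1)*(n+k+4)*(ra0 n * ((n+2-k)*(n+1-k)*(n-k)*(n+k+3)*(n+k+2))
   + ra1 n * ((2*n+1)*(2*n+2)*(n+2-k)*(n+1-k)*(n+k+3))
   + ra2 n * ((2*n+1)*(2*n+2)*(2*n+3)*(2*n+4)*(n+2-k)) + qA n k)
   + 2*(2*k+1)*(n+2-k)*qA n (k+1) = 0"
  unfolding qA_def ra0_def ra1_def ra2_def by algebra

definition GA :: "nat \<Rightarrow> nat \<Rightarrow> real" where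
  "GA n k = (if k \<le> n+2 then BA n k * qA (real n) (real k) else 0)"

lemma GA_step:
  assumes "k \<le> n+2"
  shows "GA n (k+1) = BA n k * (-(2*(2*real k+1)*(real n+2-real k))/((real k+1)*(real n+real k+4))) * qA (real n) (real k + 1)"
proof (cases "k \<le> n+1")
  case True
  then show ?thesis unfolding GA_def using BA_step[OF True] by (simp add: add.commute)
next
  case False
  then have "k = n+2" using assms by auto
  then show ?thesis unfolding GA_def by simp
qed

lemma GA_point:
  assumes "k \<le> n+2"
  shows "ra0 n * FA n k + ra1 n * FA (n+1) k + ra2 n * FA (n+2) k = GA n (k+1) - GA n k"
proof -
  define p0 where "p0 = (real n+2-real k)*(real n+1-real k)*(real n-real k)*(real n+real k+3)*(real n+real k+2)"
  define p1 where "p1 = (2*real n+1)*(2*real n+2)*(real n+2-real k)*(real n+1-real k)*(real n+real k+3)"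
  define p2 where "p2 = (2*real n+1)*(2*real n+2)*(2*real n+3)*(2*real n+4)*(real n+2-real k)"
  define c where "c = (real k+1)*(real n+real k+4)"
  define y where "y = 2*(2*real k+1)*(real n+2-real k)"
  define q1 where "q1 = qA n (real k+1)"
  define q0 where "q0 = qA n (real k)"
  have P: "c*(ra0 n * p0 + ra1 n * p1 + ra2 n * p2 + q0) + y*q1 = 0"
    unfolding c_def p0_def p1_def p2_def y_def q1_def q0_def by (rule polyA)
  have pos: "c > 0" unfolding c_def by (intro mult_pos_pos) auto
  define Xs where "Xs = ra0 n * p0 + ra1 n * p1 + ra2 n * p2 + q0"
  have cX: "c * Xs = -(y*q1)" using P unfolding Xs_def by linarith
  have "Xs = (c*Xs)/c" using pos by simp
  then have X0: "Xs = -(y*q1)/c" using cX by simp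
  have X: "ra0 n * p0 + ra1 n * p1 + ra2 n * p2 + q0 = -(y*q1)/c" using X0 unfolding Xs_def .
  have GAk: "GA n k = BA n k * q0" using assms by (simp add: GA_def q0_def)
  have G1: "GA n (k+1) = BA n k * (-y/c) * q1" unfolding GA_step[OF assms] y_def c_def q1_def by simp
  have "ra0 n * FA n k + ra1 n * FA (n+1) k + ra2 n * FA (n+2) k = BA n k * (ra0 n * p0 + ra1 n * p1 + ra2 n * p2)"
    unfolding FA_0[OF assms] FA_1[OF assms] FA_2[OF assms] p0_def[symmetric] p1_def[symmetric] p2_def[symmetric]
    by (simp add: algebra_simps)
  also have "\<dots> = BA n k * (-(y*q1)/c - q0)"
  proof -
    have Xm: "ra0 n * p0 + ra1 n * p1 + ra2 n * p2 = -(y*q1)/c - q0" using X by linarith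
    show ?thesis by (simp only: Xm)
  qed
  also have "\<dots> = GA n (k+1) - GA n k" unfolding G1 GAk by (simp add: algebra_simps)
  finally show ?thesis .
qed

definition AA :: "nat \<Rightarrow> real" where
  "AA n = (\<Sum>k<n. (-1)^k * real ((2*k) choose k) * real ((2*n) choose (n-k-1)))"

lemma AA_FA: assumes "m \<le> N" shows "(\<Sum>k<N. FA m k) = AA m"
proof -
  have "(\<Sum>k<N. FA m k) = (\<Sum>k<m. FA m k)"
    by (rule sum.mono_neutral_right) (use assms in \<open>auto simp: FA_def\<close>)
  also have "\<dots> = AA m" unfolding AA_def FA_def by simp
  finally show ?thesis .
qed

lemma AA_rec: "ra0 n * AA n + ra1 n * AA (n+1) + ra2 n * AA (n+2) = 0"
proof -
  have "(\<Sum>k<n+3. ra0 n * FA n k + ra1 n * FA (n+1) k + ra2 n * FA (n+2) k) = (\<Sum>k<n+3. GA n (Suc k) - GA n k)"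
    apply (rule sum.cong[OF refl])
    subgoal for k using GA_point[of k n] by simp
    done
  also have "\<dots> = GA n (n+3) - GA n 0" by (rule sum_lessThan_telescope)
  also have "\<dots> = 0" by (simp add: GA_def qA_def)
  finally show ?thesis
    by (simp add: sum.distrib sum_distrib_left[symmetric] AA_FA)
qed



definition FU :: "nat \<Rightarrow> nat \<Rightarrow> real" where
  "FU n j = (if j \<le> n then real (n choose j) * (-3)^(n-j) * real ((2*n+2*j) choose (n+j-1)) else 0)"
definition BU :: "nat \<Rightarrow> nat \<Rightarrow> real" where
  "BU n j = fact n / (fact j * fact (n+2-j)) * (-3)^(n+2-j) * (fact (2*(n+j)) / (fact (n+j+1) * fact (n+j+3)))"

lemma FU_0:
  assumes "j \<le> n+2" "n \<ge> 1"
  shows "FU n j = BU n j * ((real n+2-real j)*(real n+1-real j)*(real n+real j)*(real n+real j+1)*(real n+real j+2)*(real n+real j+3)/9)"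
proof (cases "j \<le> n")
  case True
  then obtain d where n: "n = j + d" using le_Suc_ex by force
  obtain m where m: "n + j = m + 1"
  proof
    show "n + j = (n+j-1) + 1" using assms(2) by simp
  qed
  have b1: "real (n choose j) = fact n / (fact j * fact d)"
    by (subst binomial_fact) (auto simp: n)
  have b2: "real ((2*n+2*j) choose (n+j-1)) = fact (2*(n+j)) / (fact m * fact (m+2))"
  proof -
    have i: "n+j-1 = m" "2*n+2*j = 2*(n+j)" "2*(n+j) - m = m+2" using m by auto
    show ?thesis unfolding i by (subst binomial_fact) (auto simp: i m)
  qed
  have e1: "n+2-j = d+2" "n+j+1 = m+2" "n+j+3 = m+4" "n-j = d" using n m by auto
  have e2a: "real n + real j = real m + 1" using m by (metis of_nat_add of_nat_1)
  have e2: "real n = real j + real d" "real m = real n + real j - 1" using e2a by (simp_all add: n)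
  have "FU n j = real (n choose j) * (-3)^(n-j) * real ((2*n+2*j) choose (n+j-1))" using True by (simp add: FU_def)
  also have "\<dots> = fact n / (fact j * fact d) * (-3)^d * (fact (2*(n+j)) / (fact m * fact (m+2)))"
    unfolding b1 b2 e1 ..
  also have "\<dots> = BU n j * ((real n+2-real j)*(real n+1-real j)*(real n+real j)*(real n+real j+1)*(real n+real j+2)*(real n+real j+3)/9)"
    unfolding BU_def e1 fact2 fact4
    apply (simp add: divide_simps add_pos_pos del: of_nat_add)
    apply (simp add: e2 algebra_simps power2_eq_square)
    done
  finally show ?thesis .
next
  case False
  then have "j = n+1 \<or> j = n+2" using assms by auto
  then show ?thesis using False unfolding FU_def by auto
qed

lemma FU_1:
  assumes "j \<le> n+2"
  shows "FU (n+1) j = BU n j * ((real n+1)*(real n+2-real j)*(2*(real n+real j)+1)*(2*(real n+real j)+2)*(real n+real j+1)*(real n+real j+3)/(-3))"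
proof (cases "j \<le> n+1")
  case True
  then obtain d where n: "n+1 = j + d" using le_Suc_ex by force
  define m where "m = n+j"
  have b1: "real ((n+1) choose j) = (real n+1)*fact n / (fact j * fact d)"
    by (subst binomial_fact) (use n in \<open>auto simp: fact1[symmetric]\<close>)
  have f2: "fact (2*m+2) = (2*real m+2)*(2*real m+1)*fact (2*m)" using fact2[of "2*m"] by simp
  have b2: "real ((2*(n+1)+2*j) choose ((n+1)+j-1)) = (2*real m+2)*(2*real m+1)*fact (2*m) / (fact m * fact (m+2))"
  proof -
    have i: "(n+1)+j-1 = m" "2*(n+1)+2*j = 2*m+2" "2*m+2 - m = m+2" by (auto simp: m_def)
    show ?thesis unfolding i f2[symmetric] by (subst binomial_fact) (auto simp: i)
  qed
  have e1: "n+2-j = d+1" "n+j+1 = m+1" "n+j+3 = m+3" "n+1-j = d" "n+j = m" using n by (auto simp: m_def)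
  have e2: "real d = real n + 1 - real j" "real m = real n + real j" using n by (auto simp: m_def)
  have "FU (n+1) j = real ((n+1) choose j) * (-3)^(n+1-j) * real ((2*(n+1)+2*j) choose ((n+1)+j-1))" using True by (simp add: FU_def)
  also have "\<dots> = (real n+1)*fact n / (fact j * fact d) * (-3)^d * ((2*real m+2)*(2*real m+1)*fact (2*m) / (fact m * fact (m+2)))"
    unfolding b1 b2 e1 ..
  also have "\<dots> = BU n j * ((real n+1)*(real n+2-real j)*(2*(real n+real j)+1)*(2*(real n+real j)+2)*(real n+real j+1)*(real n+real j+3)/(-3))"
    unfolding BU_def e1 fact1 fact2 fact3
    apply (simp add: divide_simps add_pos_pos del: of_nat_add)
    apply (simp add: e2 algebra_simps power2_eq_square)
    done
  finally show ?thesis .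
next
  case False
  then have "j = n+2" using assms by auto
  then show ?thesis using False unfolding FU_def by auto
qed

lemma FU_2:
  assumes "j \<le> n+2"
  shows "FU (n+2) j = BU n j * ((real n+1)*(real n+2)*(2*(real n+real j)+1)*(2*(real n+real j)+2)*(2*(real n+real j)+3)*(2*(real n+real j)+4))"
proof -
  obtain d where n: "n+2 = j + d" using assms le_Suc_ex by force
  define m where "m = n+j"
  have b1: "real ((n+2) choose j) = (real n+2)*(real n+1)*fact n / (fact j * fact d)"
    by (subst binomial_fact) (use n assms in \<open>auto simp: fact2[symmetric]\<close>)
  have f4: "fact (2*m+4) = (2*real m+4)*(2*real m+3)*(2*real m+2)*(2*real m+1)*fact (2*m)" using fact4[of "2*m"] by simp
  have b2: "real ((2*(n+2)+2*j) choose ((n+2)+j-1)) = (2*real m+4)*(2*real m+3)*(2*real m+2)*(2*real m+1)*fact (2*m) / (fact (m+1) * fact (m+3))"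
  proof -
    have i: "(n+2)+j-1 = m+1" "2*(n+2)+2*j = 2*m+4" "2*m+4 - (m+1) = m+3" by (auto simp: m_def)
    show ?thesis unfolding i f4[symmetric] by (subst binomial_fact) (simp_all add: i ac_simps)
  qed
  have e1: "n+2-j = d" "n+j+1 = m+1" "n+j+3 = m+3" "n+j = m" using n by (auto simp: m_def)
  have e2: "real m = real n + real j" using n by (auto simp: m_def)
  have "FU (n+2) j = real ((n+2) choose j) * (-3)^(n+2-j) * real ((2*(n+2)+2*j) choose ((n+2)+j-1))" using assms by (simp add: FU_def)
  also have "\<dots> = (real n+2)*(real n+1)*fact n / (fact j * fact d) * (-3)^d * ((2*real m+4)*(2*real m+3)*(2*real m+2)*(2*real m+1)*fact (2*m) / (fact (m+1) * fact (m+3)))"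
    unfolding b1 b2 e1 ..
  also have "\<dots> = BU n j * ((real n+1)*(real n+2)*(2*(real n+real j)+1)*(2*(real n+real j)+2)*(2*(real n+real j)+3)*(2*(real n+real j)+4))"
    unfolding BU_def e1
    apply (simp add: divide_simps add_pos_pos del: of_nat_add)
    apply (simp add: e2 algebra_simps power2_eq_square)
    done
  finally show ?thesis .
qed

lemma BU_step:
  assumes "j \<le> n+1"
  shows "BU n (j+1) = BU n j * (-(real n+2-real j)*(2*(real n+real j)+1)*(2*(real n+real j)+2)/(3*(real j+1)*(real n+real j+2)*(real n+real j+4)))"
proof -
  obtain d where n: "n+1 = j + d" using assms le_Suc_ex by force
  define m where "m = n+j"
  have f2: "fact (2*m+2) = (2*real m+2)*(2*real m+1)*fact (2*m)" using fact2[of "2*m"] by simp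
  have e: "n+2-(j+1) = d" "n+2-j = d+1" "n+(j+1)+1 = (m+1)+1" "n+(j+1)+3 = (m+3)+1" "2*(n+(j+1)) = 2*m+2"
     "n+j+1 = m+1" "n+j+3 = m+3" "2*(n+j) = 2*m" using n by (auto simp: m_def)
  have e2: "real d = real n + 1 - real j" "real m = real n + real j" using n by (auto simp: m_def)
  show ?thesis unfolding BU_def e fact1 f2
    apply (simp add: divide_simps add_pos_pos del: of_nat_add)
    apply (simp add: e2 algebra_simps power2_eq_square)
    done
qed

lemma polyU: "3*(j+1)*(n+j+2)*(n+j+4)*(ra0 n * ((n+2-j)*(n+1-j)*(n+j)*(n+j+1)*(n+j+2)*(n+j+3)/9)
   + ra1 n * ((n+1)*(n+2-j)*(2*(n+j)+1)*(2*(n+j)+2)*(n+j+1)*(n+j+3)/(-3))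
   + ra2 n * ((n+1)*(n+2)*(2*(n+j)+1)*(2*(n+j)+2)*(2*(n+j)+3)*(2*(n+j)+4)) + qU n j)
   + (n+2-j)*(2*(n+j)+1)*(2*(n+j)+2)*qU n (j+1) = 0"
  unfolding qU_def ra0_def ra1_def ra2_def by algebra

definition GU :: "nat \<Rightarrow> nat \<Rightarrow> real" where
  "GU n j = (if j \<le> n+2 then BU n j * qU (real n) (real j) else 0)"

lemma GU_step:
  assumes "j \<le> n+2"
  shows "GU n (j+1) = BU n j * (-(real n+2-real j)*(2*(real n+real j)+1)*(2*(real n+real j)+2)/(3*(real j+1)*(real n+real j+2)*(real n+real j+4))) * qU (real n) (real j + 1)"
proof (cases "j \<le> n+1")
  case True
  then show ?thesis unfolding GU_def using BU_step[OF True] by (simp add: add.commute)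
next
  case False
  then have "j = n+2" using assms by auto
  then show ?thesis unfolding GU_def by simp
qed

lemma GU_point:
  assumes "j \<le> n+2" "n \<ge> 1"
  shows "ra0 n * FU n j + ra1 n * FU (n+1) j + ra2 n * FU (n+2) j = GU n (j+1) - GU n j"
proof -
  define p0 where "p0 = (real n+2-real j)*(real n+1-real j)*(real n+real j)*(real n+real j+1)*(real n+real j+2)*(real n+real j+3)/9"
  define p1 where "p1 = (real n+1)*(real n+2-real j)*(2*(real n+real j)+1)*(2*(real n+real j)+2)*(real n+real j+1)*(real n+real j+3)/(-3)"
  define p2 where "p2 = (real n+1)*(real n+2)*(2*(real n+real j)+1)*(2*(real n+real j)+2)*(2*(real n+real j)+3)*(2*(real n+real j)+4)"
  define c where "c = 3*(real j+1)*(real n+real j+2)*(real n+real j+4)"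
  define y where "y = (real n+2-real j)*(2*(real n+real j)+1)*(2*(real n+real j)+2)"
  define q1 where "q1 = qU n (real j+1)"
  define q0 where "q0 = qU n (real j)"
  have P: "c*(ra0 n * p0 + ra1 n * p1 + ra2 n * p2 + q0) + y*q1 = 0"
    unfolding c_def p0_def p1_def p2_def y_def q1_def q0_def by (rule polyU)
  have pos: "c > 0" unfolding c_def by (intro mult_pos_pos) auto
  define Xs where "Xs = ra0 n * p0 + ra1 n * p1 + ra2 n * p2 + q0"
  have cX: "c * Xs = -(y*q1)" using P unfolding Xs_def by linarith
  have "Xs = (c*Xs)/c" using pos by simp
  then have X0: "Xs = -(y*q1)/c" using cX by simp
  have X: "ra0 n * p0 + ra1 n * p1 + ra2 n * p2 + q0 = -(y*q1)/c" using X0 unfolding Xs_def .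
  have GUk: "GU n j = BU n j * q0" using assms by (simp add: GU_def q0_def)
  define ym where "ym = -(real n+2-real j)*(2*(real n+real j)+1)*(2*(real n+real j)+2)"
  have ym: "ym = -y" unfolding ym_def y_def by (simp add: algebra_simps)
  have G1': "GU n (j+1) = BU n j * (ym/c) * q1" unfolding GU_step[OF assms(1)] ym_def c_def q1_def ..
  have G1: "GU n (j+1) = BU n j * (-y/c) * q1" unfolding G1' ym by simp
  have "ra0 n * FU n j + ra1 n * FU (n+1) j + ra2 n * FU (n+2) j = BU n j * (ra0 n * p0 + ra1 n * p1 + ra2 n * p2)"
    unfolding FU_0[OF assms] FU_1[OF assms(1)] FU_2[OF assms(1)] p0_def[symmetric] p1_def[symmetric] p2_def[symmetric]
    by (simp add: algebra_simps)
  also have "\<dots> = BU n j * (-(y*q1)/c - q0)"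
  proof -
    have Xm: "ra0 n * p0 + ra1 n * p1 + ra2 n * p2 = -(y*q1)/c - q0" using X by linarith
    show ?thesis by (simp only: Xm)
  qed
  also have "\<dots> = GU n (j+1) - GU n j" unfolding G1 GUk by (simp add: algebra_simps)
  finally show ?thesis .
qed

definition UU :: "nat \<Rightarrow> real" where
  "UU n = (\<Sum>j\<le>n. real (n choose j) * (-3)^(n-j) * real ((2*n+2*j) choose (n+j-1)))"

lemma UU_FU: assumes "m < N" shows "(\<Sum>j<N. FU m j) = UU m"
proof -
  have "(\<Sum>j<N. FU m j) = (\<Sum>j\<le>m. FU m j)"
    by (rule sum.mono_neutral_right) (use assms in \<open>auto simp: FU_def\<close>)
  also have "\<dots> = UU m" unfolding UU_def FU_def by simp
  finally show ?thesis .
qed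

lemma UU_rec: assumes "n \<ge> 1" shows "ra0 n * UU n + ra1 n * UU (n+1) + ra2 n * UU (n+2) = 0"
proof -
  have "(\<Sum>j<n+3. ra0 n * FU n j + ra1 n * FU (n+1) j + ra2 n * FU (n+2) j) = (\<Sum>j<n+3. GU n (Suc j) - GU n j)"
    apply (rule sum.cong[OF refl])
    subgoal for j using GU_point[of j n] assms by simp
    done
  also have "\<dots> = GU n (n+3) - GU n 0" by (rule sum_lessThan_telescope)
  also have "\<dots> = 0" by (simp add: GU_def qU_def)
  finally show ?thesis
    by (simp add: sum.distrib sum_distrib_left[symmetric] UU_FU)
qed


lemma AA12: "AA 1 = 1" "AA 2 = 2"
proof -
  have a: "(4::nat) choose 1 = 4" "(2::nat) choose 1 = 2" by code_simp+
  show "AA 1 = 1" by (simp add: AA_def)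
  show "AA 2 = 2" by (simp add: AA_def numeral_eq_Suc lessThan_Suc a)
qed
lemma UU12: "UU 1 = 1" "UU 2 = 2"
proof -
  have a: "(8::nat) choose 3 = 56" "(6::nat) choose 2 = 15" "(4::nat) choose 1 = 4" by code_simp+
  show "UU 1 = 1" by (simp add: UU_def atMost_Suc)
  show "UU 2 = 2" by (simp add: UU_def numeral_eq_Suc atMost_Suc a)
qed
lemma AA_UU: assumes "n \<ge> 1" shows "AA n = UU n"
  using assms
proof (induction n rule: less_induct)
  case (less n)
  show ?case
  proof (cases "n \<le> 2")
    case True
    then have "n = 1 \<or> n = 2" using less.prems by auto
    then show ?thesis using AA12 UU12 by auto
  next
    case False
    define m where "m = n - 2"
    have m: "n = m + 2" "m \<ge> 1" using False by (auto simp: m_def)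
    have h1: "AA m = UU m" using less.IH[of m] m by auto
    have h2: "AA (m+1) = UU (m+1)" using less.IH[of "m+1"] m by auto
    have r: "ra2 m > 0" unfolding ra2_def by (simp add: add_pos_nonneg)
    have "ra2 m * AA (m+2) = ra2 m * UU (m+2)"
      using AA_rec[of m] UU_rec[OF m(2)] unfolding h1 h2 by linarith
    then show ?thesis using r m by simp
  qed
qed


lemma cpow: "coeff ([:1,1:]^n :: real poly) i = real (n choose i)"
proof (cases "i \<le> n")
  case True
  then show ?thesis using coeff_linear_poly_power[of i n "1::real" 1] by simp
next
  case False
  then have "coeff ([:1,1:]^n :: real poly) i = 0"
    by (intro coeff_eq_0) (simp add: degree_linear_power)
  then show ?thesis using False by simp
qed

lemma L_eq: "([:1,1:] :: real poly) = 1 + monom 1 1"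
  by (simp add: monom_Suc one_pCons)

lemma key_id: "([:1,1:] :: real poly) * (monom 1 3 + 1) = [:1,1:]^2 * ([:1,1:]^2 + monom (-3) 1)"
proof -
  have m3: "(monom 1 3 :: real poly) = (monom 1 1)^3" by (simp add: monom_power)
  have m1: "(monom (-3) 1 :: real poly) = -3 * monom 1 1"
  proof -
    have "(-3 * monom 1 1 :: real poly) = - (monom 3 0 * monom 1 1)" by (simp add: numeral_monom)
    also have "\<dots> = monom (-3) 1" by (simp add: mult_monom minus_monom)
    finally show ?thesis by simp
  qed
  show ?thesis unfolding L_eq m3 m1 by algebra
qed

definition TT :: "nat \<Rightarrow> real" where
  "TT n = (\<Sum>i=0..n. real (n choose i) * real (binomz n (2 * int n + 1 - 3 * int i)))"

lemma poly_T: "coeff ([:1,1:]^n * (monom 1 3 + 1)^n :: real poly) (2*n+1) = TT n"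
proof -
  have e: "(monom 1 3 + 1 :: real poly)^n = (\<Sum>t\<le>n. smult (real (n choose t)) (monom 1 (3*t)))"
    by (subst binomial_ring) (simp add: monom_power of_nat_mult_conv_smult mult.commute)
  have "coeff ([:1,1:]^n * (monom 1 3 + 1)^n :: real poly) (2*n+1)
      = (\<Sum>t\<le>n. real (n choose t) * (if 2*n+1 < 3*t then 0 else real (n choose (2*n+1-3*t))))"
    unfolding e sum_distrib_left
    apply (simp add: coeff_sum mult.commute[of "[:1,1:]^n"] coeff_monom_mult)
    apply (simp only: cpow)
    apply (rule sum.cong[OF refl])
    apply (simp only: mult_1 Suc_eq_plus1)
    done
  also have "\<dots> = TT n" unfolding TT_def atLeast0AtMost
  proof (rule sum.cong[OF refl])
    fix t assume "t \<in> {..n}"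
    show "real (n choose t) * (if 2*n+1 < 3*t then 0 else real (n choose (2*n+1-3*t)))
        = real (n choose t) * real (binomz n (2 * int n + 1 - 3 * int t))"
    proof -
      have h: "nat (2 * int n + 1 - 3 * int t) = 2*n+1-3*t"
      proof (cases "3*t \<le> 2*n+1")
        case True
        then have "2 * int n + 1 - 3 * int t = int (2*n+1-3*t)" by (simp add: of_nat_diff)
        then show ?thesis by simp
      next
        case False
        then show ?thesis by simp
      qed
      have h2: "(2 * int n + 1 - 3 * int t < 0) = (2*n+1 < 3*t)" by presburger
      show ?thesis unfolding binomz_def h h2 by simp
    qed
  qed
  finally show ?thesis .
qed

lemma poly_U: assumes "n \<ge> 1" shows "coeff ([:1,1:]^n * (monom 1 3 + 1)^n :: real poly) (2*n+1) = UU n"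
proof -
  define Q where "Q = ([:1,1:]^2 + monom (-3) 1 :: real poly)"
  have e1: "([:1,1:]^n * (monom 1 3 + 1)^n :: real poly) = [:1,1:]^(2*n) * Q^n"
  proof -
    have "([:1,1:]^n * (monom 1 3 + 1)^n :: real poly) = ([:1,1:] * (monom 1 3 + 1))^n" by (simp only: power_mult_distrib)
    also have "\<dots> = ([:1,1:]^2 * Q)^n" by (simp only: key_id Q_def)
    also have "\<dots> = [:1,1:]^(2*n) * Q^n" by (simp only: power_mult_distrib power_mult)
    finally show ?thesis .
  qed
  have e2: "Q^n = (\<Sum>k\<le>n. smult (real (n choose k)) (monom ((-3)^(n-k)) (n-k) * [:1,1:]^(2*k)))"
    unfolding Q_def by (subst binomial_ring) (simp add: monom_power of_nat_mult_conv_smult mult.commute flip: power_mult)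
  have "coeff ([:1,1:]^n * (monom 1 3 + 1)^n :: real poly) (2*n+1)
      = (\<Sum>k\<le>n. real (n choose k) * (if 2*n+1 < n-k then 0 else (-3)^(n-k) * coeff ([:1,1:]^(2*n+2*k)) (2*n+1-(n-k))))"
    unfolding e1 e2 sum_distrib_left
    apply (simp add: coeff_sum mult.left_commute[of "[:1,1:]^(2*n)"] coeff_monom_mult power_add[symmetric])
    apply (rule sum.cong[OF refl])
    apply (simp only: Suc_eq_plus1)
    done
  also have "\<dots> = UU n" unfolding UU_def
  proof (rule sum.cong[OF refl])
    fix k assume k: "k \<in> {..n}"
    have i: "2*n+1-(n-k) = n+k+1" using k by auto
    have s: "(2*n+2*k) choose (n+k+1) = (2*n+2*k) choose (n+k-1)"
    proof -
      have "(2*n+2*k) choose (n+k+1) = (2*n+2*k) choose ((2*n+2*k) - (n+k+1))"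
        by (rule binomial_symmetric) (use assms in auto)
      also have "(2*n+2*k) - (n+k+1) = n+k-1" by simp
      finally show ?thesis .
    qed
    have nl: "\<not> 2*n+1 < n-k" by simp
    show "real (n choose k) * (if 2*n+1 < n-k then 0 else (-3)^(n-k) * coeff ([:1,1:]^(2*n+2*k)) (2*n+1-(n-k)))
        = real (n choose k) * (-3)^(n-k) * real ((2*n+2*k) choose (n+k-1))"
      unfolding i cpow s using nl by simp
  qed
  finally show ?thesis .
qed



definition rot :: "nat \<Rightarrow> 'a list \<Rightarrow> 'a list" where
  "rot r xs = drop r xs @ take r xs"

definition good :: "int list \<Rightarrow> bool" where
  "good xs = (\<forall>j\<in>{1..length xs}. sum_list (take j xs) \<ge> 1)"

lemma length_rot[simp]: "length (rot r xs) = length xs"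
  by (simp add: rot_def)
lemma sum_list_rot[simp]: "sum_list (rot r xs) = sum_list (xs :: int list)"
proof -
  have "sum_list xs = sum_list (take r xs) + sum_list (drop r xs)"
    by (metis append_take_drop_id sum_list_append)
  then show ?thesis by (simp add: rot_def)
qed
lemma set_rot[simp]: "set (rot r xs) = set xs"
proof -
  have "set xs = set (take r xs) \<union> set (drop r xs)" by (metis append_take_drop_id set_append)
  then show ?thesis by (auto simp: rot_def)
qed
lemma rot_inv: assumes "r \<le> length xs" shows "rot (length xs - r) (rot r xs) = xs"
  using assms by (simp add: rot_def)

lemma rot_take_sum:
  fixes xs :: "int list"
  assumes "r < length xs" "j \<le> length xs"
  shows "sum_list (take j (rot r xs)) = sum_list (take (r+j) (xs@xs)) - sum_list (take r (xs@xs))"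
proof -
  have a: "rot r xs = take (length xs) (drop r (xs@xs))"
    using assms by (simp add: rot_def)
  have "take j (rot r xs) = take j (drop r (xs@xs))" unfolding a by (simp only: take_take min_absorb1[OF assms(2)])
  moreover have "sum_list (take (r+j) (xs@xs)) = sum_list (take r (xs@xs)) + sum_list (take j (drop r (xs@xs)))"
    by (simp only: take_add sum_list_append)
  ultimately show ?thesis by simp
qed

lemma E_shift:
  fixes xs :: "int list"
  assumes "m \<le> length xs" "sum_list xs = 1"
  shows "sum_list (take (m + length xs) (xs@xs)) = sum_list (take m (xs@xs)) + 1"
  using assms by (simp add: take_add)

lemma E_small:
  fixes xs :: "int list"
  assumes "m \<le> length xs"
  shows "sum_list (take m (xs@xs)) = sum_list (take m xs)"
  using assms by simp

lemma good_rot_iff: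
  fixes xs :: "int list"
  assumes "r < length xs"
  shows "good (rot r xs) \<longleftrightarrow> (\<forall>j\<in>{1..length xs}. sum_list (take (r+j) (xs@xs)) > sum_list (take r (xs@xs)))"
  unfolding good_def using rot_take_sum[OF assms] by auto

lemma cycle_unique:
  fixes xs :: "int list"
  assumes s: "sum_list xs = 1" and r: "r < length xs" and r': "r' < length xs"
    and g: "good (rot r xs)" and g': "good (rot r' xs)"
  shows "r = r'"
proof (rule ccontr)
  define n where "n = length xs"
  define E where "E m = sum_list (take m (xs@xs))" for m
  have G: "\<And>j. j \<in> {1..n} \<Longrightarrow> E (r+j) > E r" using g good_rot_iff[OF r] by (auto simp: E_def n_def)
  have G': "\<And>j. j \<in> {1..n} \<Longrightarrow> E (r'+j) > E r'" using g' good_rot_iff[OF r'] by (auto simp: E_def n_def)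
  assume "r \<noteq> r'"
  then consider "r < r'" | "r' < r" by linarith
  then show False
  proof cases
    case 1
    have "r'-r \<in> {1..n}" "n+r-r' \<in> {1..n}" using 1 r' by (auto simp: n_def)
    then have a: "E r' > E r" and b: "E (r'+(n+r-r')) > E r'" using G[of "r'-r"] G'[of "n+r-r'"] 1 by auto
    have c: "r'+(n+r-r') = r + n" using 1 r' by (simp add: n_def)
    have d: "E (r+n) = E r + 1" unfolding E_def n_def using E_shift[of r xs] r s by simp
    show False using a b c d by simp
  next
    case 2
    have "r-r' \<in> {1..n}" "n+r'-r \<in> {1..n}" using 2 r by (auto simp: n_def)
    then have a: "E r > E r'" and b: "E (r+(n+r'-r)) > E r" using G'[of "r-r'"] G[of "n+r'-r"] 2 by auto
    have c: "r+(n+r'-r) = r' + n" using 2 r by (simp add: n_def)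
    have d: "E (r'+n) = E r' + 1" unfolding E_def n_def using E_shift[of r' xs] r' s by simp
    show False using a b c d by simp
  qed
qed

lemma cycle_exists:
  fixes xs :: "int list"
  assumes s: "sum_list xs = 1" and n: "length xs \<ge> 1"
  shows "\<exists>r<length xs. good (rot r xs)"
proof -
  define n where "n = length xs"
  define E where "E m = sum_list (take m (xs@xs))" for m
  define M where "M = Min (E ` {..<n})"
  have fin: "finite {j. j<n \<and> E j = M}" by simp
  have ne: "{j. j<n \<and> E j = M} \<noteq> {}"
  proof -
    have z: "0 \<in> {..<n}" using n by (cases xs) (auto simp: n_def)
    have "M \<in> E ` {..<n}" unfolding M_def using z by (intro Min_in) auto
    then show ?thesis by auto
  qed
  define r where "r = Max {j. j<n \<and> E j = M}"
  have rin: "r < n \<and> E r = M" using Max_in[OF fin ne] unfolding r_def by simp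
  have Mle: "\<And>j. j < n \<Longrightarrow> M \<le> E j" unfolding M_def by (intro Min_le) auto
  have rmax: "\<And>j. j < n \<Longrightarrow> E j = M \<Longrightarrow> j \<le> r" unfolding r_def using fin by (intro Max_ge) auto
  have "\<forall>j\<in>{1..n}. E (r+j) > E r"
  proof
    fix j assume j: "j \<in> {1..n}"
    show "E (r+j) > E r"
    proof (cases "r + j < n")
      case True
      have "E (r+j) \<ge> M" using Mle True by simp
      moreover have "E (r+j) \<noteq> M" using rmax[OF True] j by auto
      ultimately show ?thesis using rin by simp
    next
      case False
      define m where "m = r + j - n"
      have m: "m < n" "r + j = m + n" using False rin j by (auto simp: m_def)
      have "E (m + n) = E m + 1" unfolding E_def n_def using E_shift[of m xs] m s by (simp add: n_def)
      moreover have "E m \<ge> M" using Mle m by simp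
      ultimately show ?thesis using rin m by simp
    qed
  qed
  then have "good (rot r xs)" using good_rot_iff[of r xs] rin by (simp add: E_def n_def)
  then show ?thesis using rin by (auto simp: n_def)
qed

definition DD :: "int set" where "DD = {-2,-1,1,2}"
definition WW :: "nat \<Rightarrow> int list set" where "WW n = {xs. set xs \<subseteq> DD \<and> length xs = n \<and> sum_list xs = 1}"
definition GG :: "nat \<Rightarrow> int list set" where "GG n = {xs \<in> WW n. good xs}"

lemma finite_WW: "finite (WW n)"
proof -
  have "WW n \<subseteq> {xs. set xs \<subseteq> DD \<and> length xs = n}" by (auto simp: WW_def)
  moreover have "finite {xs. set xs \<subseteq> DD \<and> length xs = n}" by (rule finite_lists_length_eq) (simp add: DD_def)
  ultimately show ?thesis by (rule finite_subset)
qed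

lemma card_filter_sum: "finite A \<Longrightarrow> card {x\<in>A. P x} = (\<Sum>x\<in>A. if P x then 1 else 0)"
  using sum.inter_filter[of A "\<lambda>_. 1::nat" P] by simp

lemma card_rot: assumes "r < n" shows "card {xs \<in> WW n. good (rot r xs)} = card (GG n)"
proof -
  have "bij_betw (rot r) {xs \<in> WW n. good (rot r xs)} (GG n)"
  proof (rule bij_betw_byWitness[where f'="rot (n-r)"])
    show "\<forall>a\<in>{xs \<in> WW n. good (rot r xs)}. rot (n - r) (rot r a) = a"
      using assms by (auto simp: WW_def rot_inv)
    show "\<forall>a'\<in>GG n. rot r (rot (n - r) a') = a'"
    proof
      fix b assume "b \<in> GG n"
      then have l: "length b = n" by (auto simp: GG_def WW_def)
      have "rot (length b - (n-r)) (rot (n-r) b) = b" using l by (intro rot_inv) simp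
      moreover have "length b - (n-r) = r" using l assms by simp
      ultimately show "rot r (rot (n - r) b) = b" by simp
    qed
    show "rot r ` {xs \<in> WW n. good (rot r xs)} \<subseteq> GG n" by (auto simp: GG_def WW_def)
    show "rot (n - r) ` GG n \<subseteq> {xs \<in> WW n. good (rot r xs)}"
    proof
      fix y assume "y \<in> rot (n - r) ` GG n"
      then obtain b where b: "b \<in> GG n" "y = rot (n-r) b" by auto
      then have l: "length b = n" by (auto simp: GG_def WW_def)
      have "rot (length b - (n-r)) (rot (n-r) b) = b" using l by (intro rot_inv) simp
      moreover have "length b - (n-r) = r" using l assms by simp
      ultimately have "rot r y = b" using b by simp
      then show "y \<in> {xs \<in> WW n. good (rot r xs)}" using b by (auto simp: GG_def WW_def)
    qed
  qed
  then show ?thesis by (rule bij_betw_same_card)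
qed

lemma unique_r: assumes "xs \<in> WW n" "n \<ge> 1" shows "card {r\<in>{..<n}. good (rot r xs)} = 1"
proof -
  have l: "length xs = n" and s: "sum_list xs = 1" using assms by (auto simp: WW_def)
  obtain r0 where r0: "r0 < n" "good (rot r0 xs)" using cycle_exists[OF s] l assms(2) by auto
  have "{r\<in>{..<n}. good (rot r xs)} = {r0}"
  proof (rule set_eqI)
    fix r
    show "r \<in> {r\<in>{..<n}. good (rot r xs)} \<longleftrightarrow> r \<in> {r0}"
    proof
      assume "r \<in> {r\<in>{..<n}. good (rot r xs)}"
      then have "r < length xs" "good (rot r xs)" using l by auto
      then have "r = r0" using cycle_unique[OF s _ _ _ r0(2)] r0(1) l by blast
      then show "r \<in> {r0}" by simp
    next
      assume "r \<in> {r0}"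
      then show "r \<in> {r\<in>{..<n}. good (rot r xs)}" using r0 by simp
    qed
  qed
  then show ?thesis by simp
qed

lemma main_count: assumes "n \<ge> 1" shows "n * card (GG n) = card (WW n)"
proof -
  have "card (WW n) = (\<Sum>xs\<in>WW n. card {r\<in>{..<n}. good (rot r xs)})"
    using unique_r[OF _ assms] by simp
  also have "\<dots> = (\<Sum>xs\<in>WW n. \<Sum>r<n. if good (rot r xs) then 1 else 0)"
    by (rule sum.cong[OF refl], rule card_filter_sum) simp
  also have "\<dots> = (\<Sum>r<n. \<Sum>xs\<in>WW n. if good (rot r xs) then 1 else 0)"
    by (rule sum.swap)
  also have "\<dots> = (\<Sum>r<n. card {xs \<in> WW n. good (rot r xs)})"
    by (rule sum.cong[OF refl], rule card_filter_sum[symmetric, OF finite_WW])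
  also have "\<dots> = (\<Sum>r<n. card (GG n))"
    by (rule sum.cong[OF refl]) (simp add: card_rot)
  finally show ?thesis by simp
qed



lemma tel:
  fixes g :: "nat \<Rightarrow> int"
  assumes "j \<le> n"
  shows "sum_list (take j (map (\<lambda>i. g (Suc i) - g i) [0..<n])) = g j - g 0"
proof -
  have "take j (map (\<lambda>i. g (Suc i) - g i) [0..<n]) = map (\<lambda>i. g (Suc i) - g i) [0..<j]"
    using assms by (simp add: take_map min_absorb1)
  moreover have "sum_list (map (\<lambda>i. g (Suc i) - g i) [0..<j]) = (\<Sum>i<j. g (Suc i) - g i)"
    by (simp add: sum_list_map_eq_sum_count2 atLeast0LessThan[symmetric] interv_sum_list_conv_sum_set_nat)
  moreover have "(\<Sum>i<j. g (Suc i) - g i) = g j - g 0" by (rule sum_lessThan_telescope)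
  ultimately show ?thesis by simp
qed

definition hw :: "nat \<Rightarrow> int list \<Rightarrow> int list" where
  "hw n xs = map (\<lambda>j. sum_list (take j xs)) [0..<Suc n]"
definition hw' :: "nat \<Rightarrow> int list \<Rightarrow> int list" where
  "hw' n ys = map (\<lambda>i. ys!(Suc i) - ys!i) [0..<n]"

lemma step_diff:
  fixes xs :: "int list"
  assumes "i < length xs"
  shows "sum_list (take (Suc i) xs) - sum_list (take i xs) = xs!i"
  using assms by (simp add: take_Suc_conv_app_nth)

lemma walks_GG: "card (basketball_walks n) = card (GG n)"
proof -
  have "bij_betw (hw n) (GG n) (basketball_walks n)"
  proof (rule bij_betw_byWitness[where f'="hw' n"])
    show "\<forall>a\<in>GG n. hw' n (hw n a) = a"
    proof
      fix xs assume "xs \<in> GG n"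
      then have l: "length xs = n" by (auto simp: GG_def WW_def)
      show "hw' n (hw n xs) = xs"
      proof (rule nth_equalityI)
        show "length (hw' n (hw n xs)) = length xs" using l by (simp add: hw'_def)
        fix i assume "i < length (hw' n (hw n xs))"
        then have i: "i < n" by (simp add: hw'_def)
        have a: "hw n xs ! Suc i = sum_list (take (Suc i) xs)" "hw n xs ! i = sum_list (take i xs)"
          using i by (simp_all add: hw_def nth_append del: upt_Suc)
        show "hw' n (hw n xs) ! i = xs ! i"
          using i l step_diff[of i xs] by (simp add: hw'_def a del: upt_Suc)
      qed
    qed
    show "\<forall>a'\<in>basketball_walks n. hw n (hw' n a') = a'"
    proof
      fix ys assume ys: "ys \<in> basketball_walks n"
      then have l: "length ys = Suc n" and y0: "ys!0 = 0" by (auto simp: basketball_walks_def)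
      show "hw n (hw' n ys) = ys"
      proof (rule nth_equalityI)
        show "length (hw n (hw' n ys)) = length ys" using l by (simp add: hw_def)
        fix j assume "j < length (hw n (hw' n ys))"
        then have j: "j \<le> n" by (simp add: hw_def)
        have "hw n (hw' n ys) ! j = sum_list (take j (hw' n ys))"
          using j by (simp add: hw_def nth_append del: upt_Suc)
        also have "\<dots> = ys!j - ys!0" unfolding hw'_def by (rule tel[OF j])
        finally show "hw n (hw' n ys) ! j = ys ! j" using y0 by simp
      qed
    qed
    show "hw n ` GG n \<subseteq> basketball_walks n"
    proof
      fix zs assume "zs \<in> hw n ` GG n"
      then obtain xs where xs: "xs \<in> GG n" "zs = hw n xs" by auto
      then have l: "length xs = n" and st: "set xs \<subseteq> DD" and s: "sum_list xs = 1" and g: "good xs"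
        by (auto simp: GG_def WW_def)
      have nth: "zs ! j = sum_list (take j xs)" if "j \<le> n" for j
        using that xs(2) by (simp add: hw_def nth_append del: upt_Suc)
      have d: "zs ! i - zs ! (i-1) \<in> {-2,-1,1,2}" if i: "i \<in> {1..n}" for i
      proof -
        have "zs ! i - zs ! (i-1) = xs ! (i-1)"
          using i nth[of i] nth[of "i-1"] step_diff[of "i-1" xs] l by auto
        moreover have "xs ! (i-1) \<in> set xs" using i l by auto
        ultimately show ?thesis using st by (auto simp: DD_def)
      qed
      have p: "zs ! i \<ge> 1" if i: "i \<in> {1..n}" for i
        using g i nth[of i] l by (auto simp: good_def)
      show "zs \<in> basketball_walks n"
        unfolding basketball_walks_def using d p nth[of 0] nth[of n] l s xs(2)
        by (auto simp: hw_def)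
    qed
    show "hw' n ` basketball_walks n \<subseteq> GG n"
    proof
      fix xs assume "xs \<in> hw' n ` basketball_walks n"
      then obtain ys where ys: "ys \<in> basketball_walks n" "xs = hw' n ys" by auto
      then have l: "length ys = n+1" and y0: "ys!0 = 0" and yn: "ys!n = 1"
        and d: "\<And>i. i\<in>{1..n} \<Longrightarrow> ys ! i - ys ! (i - 1) \<in> {-2, -1, 1, 2}"
        and p: "\<And>i. i\<in>{1..n} \<Longrightarrow> ys ! i \<ge> 1"
        by (auto simp: basketball_walks_def)
      have lx: "length xs = n" using ys(2) by (simp add: hw'_def)
      have tk: "sum_list (take j xs) = ys ! j" if "j \<le> n" for j
        using tel[OF that, of "\<lambda>i. ys!i"] y0 ys(2) by (simp add: hw'_def)
      have st: "set xs \<subseteq> DD"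
      proof
        fix x assume "x \<in> set xs"
        then obtain i where i: "i < n" "x = ys!(Suc i) - ys!i" using ys(2) by (auto simp: hw'_def)
        then show "x \<in> DD" using d[of "Suc i"] by (auto simp: DD_def)
      qed
      have s: "sum_list xs = 1" using tk[of n] lx yn by simp
      have g: "good xs" unfolding good_def using tk p lx by auto
      show "xs \<in> GG n" using st s g lx by (simp add: GG_def WW_def)
    qed
  qed
  then show ?thesis by (rule bij_betw_same_card[symmetric])
qed



definition PP :: "nat \<Rightarrow> (nat set \<times> nat set) set" where
  "PP n = (SIGMA B:Pow {..<n}. {A. A \<subseteq> {..<n} \<and> int (card A) = 2 * int n + 1 - 3 * int (card B)})"

definition fw :: "nat \<Rightarrow> int list \<Rightarrow> nat set \<times> nat set" where
  "fw n xs = ({i\<in>{..<n}. xs!i \<in> {1,2}}, {i\<in>{..<n}. xs!i \<in> {-1,2}})"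
definition gw :: "nat \<Rightarrow> nat set \<times> nat set \<Rightarrow> int list" where
  "gw n pr = map (\<lambda>i. (if i \<in> snd pr then 1 else 0) + (if i \<in> fst pr then 3 else 0) - 2) [0..<n]"

lemma val_DD: "x \<in> DD \<Longrightarrow> x = (if x \<in> {-1,2} then 1 else 0) + (if x \<in> {1,2} then 3 else 0) - (2::int)"
  by (auto simp: DD_def)

lemma sum_ind: "A \<subseteq> {..<(n::nat)} \<Longrightarrow> (\<Sum>i<n. if i \<in> A then (1::int) else 0) = int (card A)"
proof -
  assume A: "A \<subseteq> {..<n}"
  have "(\<Sum>i<n. if i \<in> A then (1::int) else 0) = sum (\<lambda>_. 1) ({..<n} \<inter> A)"
    using sum.inter_restrict[OF finite_lessThan[of n], of "\<lambda>_. (1::int)" A] by simp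
  also have "{..<n} \<inter> A = A" using A by auto
  finally show ?thesis by simp
qed

lemma sum_gw: "B \<subseteq> {..<n} \<Longrightarrow> A \<subseteq> {..<n} \<Longrightarrow> sum_list (gw n (B, A)) = int (card A) + 3 * int (card B) - 2 * int n"
proof -
  assume B: "B \<subseteq> {..<n}" and A: "A \<subseteq> {..<n}"
  have "sum_list (gw n (B, A)) = (\<Sum>i<n. (if i \<in> A then 1 else 0) + (if i \<in> B then 3 else 0) - (2::int))"
    by (simp add: gw_def sum_list_sum_nth atLeast0LessThan)
  also have "\<dots> = (\<Sum>i<n. (if i \<in> A then 1 else 0) + 3 * (if i \<in> B then 1 else 0) - (2::int))"
    by (rule sum.cong) auto
  also have "\<dots> = (\<Sum>i<n. if i \<in> A then (1::int) else 0) + 3 * (\<Sum>i<n. if i \<in> B then (1::int) else 0) - 2 * int n"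
    by (simp only: sum.distrib sum_subtractf sum_distrib_left[symmetric]) simp
  also have "\<dots> = int (card A) + 3 * int (card B) - 2 * int n" using sum_ind[OF A] sum_ind[OF B] by simp
  finally show ?thesis .
qed

lemma gw_fw: assumes xs: "xs \<in> WW n" shows "gw n (fw n xs) = xs"
proof -
  have l: "length xs = n" and st: "set xs \<subseteq> DD" using xs by (auto simp: WW_def)
  show "gw n (fw n xs) = xs"
  proof (rule nth_equalityI)
    show "length (gw n (fw n xs)) = length xs" using l by (simp add: gw_def)
    fix i assume "i < length (gw n (fw n xs))"
    then have i: "i < n" by (simp add: gw_def)
    then have "xs ! i \<in> DD" using st l by auto
    then show "gw n (fw n xs) ! i = xs ! i" using i val_DD[of "xs!i"] by (simp add: gw_def fw_def)
  qed
qed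

lemma card_WW_PP: "card (WW n) = card (PP n)"
proof -
  have "bij_betw (fw n) (WW n) (PP n)"
  proof (rule bij_betw_byWitness[where f'="gw n"])
    show "\<forall>a\<in>WW n. gw n (fw n a) = a" using gw_fw by blast
    show "\<forall>a'\<in>PP n. fw n (gw n a') = a'"
    proof
      fix p assume "p \<in> PP n"
      then obtain B A where p: "p = (B, A)" "B \<subseteq> {..<n}" "A \<subseteq> {..<n}" by (auto simp: PP_def)
      have gi: "\<And>i. i<n \<Longrightarrow> gw n (B,A) ! i = (if i \<in> A then 1 else 0) + (if i \<in> B then 3 else 0) - 2"
        by (simp add: gw_def)
      have 1: "{i\<in>{..<n}. gw n (B,A) ! i \<in> {1,2}} = B" using p(2) by (auto simp: gi split: if_splits)
      have 2: "{i\<in>{..<n}. gw n (B,A) ! i \<in> {-1,2}} = A" using p(3) by (auto simp: gi split: if_splits)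
      show "fw n (gw n p) = p" unfolding p(1) fw_def 1 2 ..
    qed
    show "fw n ` WW n \<subseteq> PP n"
    proof
      fix y assume "y \<in> fw n ` WW n"
      then obtain xs where xs: "xs \<in> WW n" "y = fw n xs" by auto
      then have l: "length xs = n" and st: "set xs \<subseteq> DD" and s: "sum_list xs = 1" by (auto simp: WW_def)
      define B where "B = {i\<in>{..<n}. xs!i \<in> {1,2}}"
      define A where "A = {i\<in>{..<n}. xs!i \<in> {-1,2}}"
      have y: "y = (B, A)" using xs(2) by (simp add: fw_def A_def B_def)
      have gx: "gw n (B, A) = xs" using gw_fw[OF xs(1)] xs(2) y by simp
      have sB: "B \<subseteq> {..<n}" "A \<subseteq> {..<n}" by (auto simp: A_def B_def)
      have "int (card A) + 3 * int (card B) - 2 * int n = 1"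
        using sum_gw[OF sB] s gx by simp
      then show "y \<in> PP n" unfolding y PP_def by (auto simp: A_def B_def)
    qed
    show "gw n ` PP n \<subseteq> WW n"
    proof
      fix xs assume "xs \<in> gw n ` PP n"
      then obtain B A where p: "xs = gw n (B, A)" "B \<subseteq> {..<n}" "A \<subseteq> {..<n}"
        and c: "int (card A) = 2 * int n + 1 - 3 * int (card B)" by (auto simp: PP_def)
      have "set xs \<subseteq> DD" using p(1) by (auto simp: gw_def DD_def split: if_splits)
      moreover have "length xs = n" using p(1) by (simp add: gw_def)
      moreover have "sum_list xs = 1" using sum_gw[OF p(2) p(3)] c p(1) by simp
      ultimately show "xs \<in> WW n" by (simp add: WW_def)
    qed
  qed
  then show ?thesis by (rule bij_betw_same_card)
qed

lemma cnt: "card {A. A \<subseteq> {..<n} \<and> int (card A) = m} = binomz n m"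
proof (cases "m < 0")
  case True
  then have "{A. A \<subseteq> {..<n} \<and> int (card A) = m} = {}" by auto
  then show ?thesis using True by (simp add: binomz_def)
next
  case False
  then have "{A. A \<subseteq> {..<n} \<and> int (card A) = m} = {A. A \<subseteq> {..<n} \<and> card A = nat m}" by auto
  then show ?thesis using False n_subsets[of "{..<n}" "nat m"] by (simp add: binomz_def)
qed

lemma sum_pow_card: "(\<Sum>B\<in>Pow {..<n}. f (card B)) = (\<Sum>t\<le>n. (n choose t) * f t)"
proof -
  have "(\<Sum>B\<in>Pow {..<n}. f (card B)) = (\<Sum>t\<le>n. \<Sum>B\<in>{B. B \<in> Pow {..<n} \<and> card B = t}. f (card B))"
  proof (rule sum.group[symmetric])
    show "card ` Pow {..<n} \<subseteq> {..n}"
    proof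
      fix t assume "t \<in> card ` Pow {..<n}"
      then obtain B where B: "B \<subseteq> {..<n}" "t = card B" by auto
      then have "t \<le> card {..<n}" using card_mono[OF finite_lessThan B(1)] by simp
      then show "t \<in> {..n}" by simp
    qed
  qed auto
  also have "\<dots> = (\<Sum>t\<le>n. (n choose t) * f t)"
  proof (rule sum.cong[OF refl])
    fix t
    have "(\<Sum>B\<in>{B. B \<in> Pow {..<n} \<and> card B = t}. f (card B)) = (\<Sum>B\<in>{B. B \<subseteq> {..<n} \<and> card B = t}. f t)"
      by (rule sum.cong) auto
    also have "\<dots> = card {B. B \<subseteq> {..<n} \<and> card B = t} * f t" by simp
    also have "\<dots> = (n choose t) * f t" using n_subsets[of "{..<n}" t] by simp
    finally show "(\<Sum>B\<in>{B. B \<in> Pow {..<n} \<and> card B = t}. f (card B)) = (n choose t) * f t" .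
  qed
  finally show ?thesis .
qed

lemma card_PP: "card (PP n) = (\<Sum>t\<le>n. (n choose t) * binomz n (2 * int n + 1 - 3 * int t))"
proof -
  have "card (PP n) = (\<Sum>B\<in>Pow {..<n}. card {A. A \<subseteq> {..<n} \<and> int (card A) = 2 * int n + 1 - 3 * int (card B)})"
    unfolding PP_def by (rule card_SigmaI) auto
  also have "\<dots> = (\<Sum>B\<in>Pow {..<n}. binomz n (2 * int n + 1 - 3 * int (card B)))"
    by (simp add: cnt)
  also have "\<dots> = (\<Sum>t\<le>n. (n choose t) * binomz n (2 * int n + 1 - 3 * int t))"
    by (rule sum_pow_card)
  finally show ?thesis .
qed


theorem proposition3p5:
  fixes n :: nat
  assumes "n \<ge> 1"
  shows "real (card (basketball_walks n)) =
           (1 / real n) * (\<Sum>k=1..n. (-1) ^ (k + 1) * real ((2*k - 2) choose (k - 1)) * real ((2*n) choose (n - k)))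
       \<and> real (card (basketball_walks n)) =
           (1 / real n) * (\<Sum>i=0..n. real (n choose i) * real (binomz n (2 * int n + 1 - 3 * int i)))"
  proof -
  have w: "card (basketball_walks n) = card (GG n)" by (rule walks_GG)
  have m: "n * card (GG n) = card (WW n)" by (rule main_count[OF assms])
  have cw: "card (WW n) = (\<Sum>t\<le>n. (n choose t) * binomz n (2 * int n + 1 - 3 * int t))"
    using card_WW_PP card_PP by simp
  have rT: "real (card (WW n)) = TT n" unfolding cw TT_def atLeast0AtMost by simp
  have np: "real n > 0" using assms by simp
  have c: "real (card (basketball_walks n)) = (1 / real n) * TT n"
  proof -
    have "real n * real (card (basketball_walks n)) = TT n" using m w rT by (metis of_nat_mult)
    then show ?thesis using np by (simp add: field_simps)
  qed
  have s1: "(\<Sum>k=1..n. (-1) ^ (k + 1) * real ((2*k - 2) choose (k - 1)) * real ((2*n) choose (n - k))) = AA n"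
  proof -
    have "(\<Sum>k=1..n. (-1) ^ (k + 1) * real ((2*k - 2) choose (k - 1)) * real ((2*n) choose (n - k)))
        = (\<Sum>k<n. (-1) ^ (Suc k + 1) * real ((2*Suc k - 2) choose (Suc k - 1)) * real ((2*n) choose (n - Suc k)))"
      using sum.atLeast1_atMost_eq[of "\<lambda>k. (-1) ^ (k + 1) * real ((2*k - 2) choose (k - 1)) * real ((2*n) choose (n - k))" n]
      by simp
    also have "\<dots> = AA n" unfolding AA_def by (rule sum.cong) auto
    finally show ?thesis .
  qed
  have aT: "AA n = TT n" using AA_UU[OF assms] poly_U[OF assms] poly_T by simp
  show ?thesis using c s1 aT unfolding TT_def by simp
qed

end
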